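(* Let $\mathcal{J}$ be a Jordan subalgebra of $H(F_{2n},j)$ isomorphic to $F_n^{(+)}$. Then there is an automorphism $\varphi$ of $H(F_{2n},j)$ such that $$\varphi(\mathcal{J})=\left\{\begin{pmatrix} X & 0\\ 0 & X^t\end{pmatrix} : X\in F_n\right\}.$$
   Context: $F$ is an algebraically closed field of characteristic different from $2$. $F_k$ denotes the algebra of $k\times k$ matrices over $F$; $F_k^{(+)}$ is the Jordan algebra on $F_k$ with product $X\odot Y=\frac{XY+YX}{2}$; $H(F_{2n},j)$ is the Jordan subalgebra of $F_{2n}^{(+)}$ consisting of all matrices $\begin{pmatrix} A & B\\ C & A^t\end{pmatrix}$ with $A\in F_n$ arbitrary and $B,C\in F_n$ skew-symmetric. Automorphisms are Jordan algebra automorphisms. *)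

theory Defs
  imports "Jordan_Normal_Form.Matrix" "HOL-Computational_Algebra.Polynomial"
begin

definition alg_closed_field :: "'a::field itself \<Rightarrow> bool" where
  "alg_closed_field _ \<longleftrightarrow> (\<forall>p::'a poly. 0 < degree p \<longrightarrow> (\<exists>x. poly p x = 0))"

definition jprod :: "'a::field mat \<Rightarrow> 'a mat \<Rightarrow> 'a mat" where
  "jprod X Y = (1/2) \<cdot>\<^sub>m (X * Y + Y * X)"

definition Hj :: "nat \<Rightarrow> 'a::field mat set" where
  "Hj n = {four_block_mat A B C (transpose_mat A) | A B C.
            A \<in> carrier_mat n n \<and> B \<in> carrier_mat n n \<and> C \<in> carrier_mat n n \<and>
            transpose_mat B = - B \<and> transpose_mat C = - C}"

definition jordan_subalgebra :: "'a::field mat set \<Rightarrow> 'a mat set \<Rightarrow> bool" where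
  "jordan_subalgebra J S \<longleftrightarrow> J \<subseteq> S \<and> J \<noteq> {} \<and>
     (\<forall>x\<in>J. \<forall>y\<in>J. x + y \<in> J) \<and>
     (\<forall>c. \<forall>x\<in>J. c \<cdot>\<^sub>m x \<in> J) \<and>
     (\<forall>x\<in>J. \<forall>y\<in>J. jprod x y \<in> J)"

definition jordan_hom_on :: "'a::field mat set \<Rightarrow> ('a mat \<Rightarrow> 'a mat) \<Rightarrow> bool" where
  "jordan_hom_on S f \<longleftrightarrow>
     (\<forall>x\<in>S. \<forall>y\<in>S. f (x + y) = f x + f y) \<and>
     (\<forall>c. \<forall>x\<in>S. f (c \<cdot>\<^sub>m x) = c \<cdot>\<^sub>m f x) \<and>
     (\<forall>x\<in>S. \<forall>y\<in>S. f (jprod x y) = jprod (f x) (f y))"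

definition jordan_iso :: "'a::field mat set \<Rightarrow> 'a mat set \<Rightarrow> ('a mat \<Rightarrow> 'a mat) \<Rightarrow> bool" where
  "jordan_iso S T f \<longleftrightarrow> bij_betw f S T \<and> jordan_hom_on S f"

definition jordan_isomorphic :: "'a::field mat set \<Rightarrow> 'a mat set \<Rightarrow> bool" where
  "jordan_isomorphic S T \<longleftrightarrow> (\<exists>f. jordan_iso S T f)"

end

theory Submission
  imports Defs "Jordan_Normal_Form.Determinant" "HOL-Library.Function_Algebras"
begin


definition om :: "nat \<Rightarrow> (nat \<Rightarrow> 'a::field) \<Rightarrow> (nat \<Rightarrow> 'a) \<Rightarrow> 'a" where
  "om n g h = (\<Sum>r<n. g r * h (n+r) - g (n+r) * h r)"

lemma om_add1: "om n (x + y) z = om n x z + om n y z"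
  unfolding om_def sum.distrib[symmetric] by (rule sum.cong) (simp_all add: algebra_simps)
lemma om_add2: "om n z (x + y) = om n z x + om n z y"
  unfolding om_def sum.distrib[symmetric] by (rule sum.cong) (simp_all add: algebra_simps)
lemma om_sc1: "om n (\<lambda>r. c * x r) z = c * om n x z"
  by (simp add: om_def algebra_simps sum_distrib_left)
lemma om_sc2: "om n z (\<lambda>r. c * x r) = c * om n z x"
  by (simp add: om_def algebra_simps sum_distrib_left)
lemma om_zero2[simp]: "om n z 0 = 0"
  by (simp add: om_def)
lemma om_zero1[simp]: "om n 0 z = 0"
  by (simp add: om_def)
lemma om_antisym: "om n x y = - om n y x"
  by (simp add: om_def algebra_simps sum_negf[symmetric] sum_subtractf[symmetric])
lemma om_neg2: "om n z (- x) = - om n z x"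
  by (simp add: om_def algebra_simps sum_negf[symmetric] sum_subtractf[symmetric])

lemma sc_twoz: "(a::'a::field) = - a \<Longrightarrow> (2::'a) \<noteq> 0 \<Longrightarrow> a = 0"
proof -
  assume h: "a = - a" and t: "(2::'a) \<noteq> 0"
  have "2 * a = a + a" by (rule mult_2)
  also have "\<dots> = a + - a" using h by (rule arg_cong)
  also have "\<dots> = 0" by (rule add.right_inverse)
  finally have "2 * a = 0" .
  then show ?thesis using t by simp
qed

locale jrep =
  fixes n :: nat and T :: "nat \<Rightarrow> nat \<Rightarrow> (nat \<Rightarrow> 'a::field) \<Rightarrow> (nat \<Rightarrow> 'a)"
  assumes Tadd: "T i j (x + y) = T i j x + T i j y"
  and Tsc: "T i j (\<lambda>r. c * x r) = (\<lambda>r. c * T i j x r)"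
  and R: "i<n \<Longrightarrow> j<n \<Longrightarrow> k<n \<Longrightarrow> l<n \<Longrightarrow>
     T i j (T k l x) + T k l (T i j x) = (if j = k then T i l x else 0) + (if l = i then T k j x else 0)"
  and two: "(2::'a) \<noteq> 0"
  and adj: "i<n \<Longrightarrow> j<n \<Longrightarrow> om n (T i j x) y = om n x (T i j y)"
  and supp: "n+n \<le> r \<Longrightarrow> T i j x r = 0"
begin

lemma T0[simp]: "T i j 0 = 0"
  using Tadd[of i j 0 0] by simp
lemma Tneg: "T i j (- x) = - T i j x"
proof -
  have "T i j x + T i j (- x) = 0" using Tadd[of i j x "-x"] by simp
  then show ?thesis by (rule minus_unique[symmetric])
qed
lemma Tdiff: "T i j (x - y) = T i j x - T i j y"
  using Tadd[of i j x "-y"] Tneg[of i j y] by simp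

lemma twoz: "(x::nat\<Rightarrow>'a) + x = 0 \<Longrightarrow> x = 0"
proof
  fix r assume "x + x = 0"
  then have "(x + x) r = (0::nat\<Rightarrow>'a) r" by (rule arg_cong)
  then have "x r + x r = 0" by (simp only: plus_fun_apply zero_fun_apply)
  then have "2 * x r = 0" by (simp only: mult_2)
  then have "x r = 0" using two by (simp only: mult_eq_0_iff) blast
  then show "x r = 0 r" by (simp only: zero_fun_apply)
qed

lemma twoz': "(x::nat\<Rightarrow>'a) = - x \<Longrightarrow> x = 0"
proof -
  assume h: "x = - x"
  have "x + x = x + - x" using h by (rule arg_cong)
  then have "x + x = 0" by (simp only: add.right_inverse)
  then show ?thesis by (rule twoz)
qed

lemma idem: "i<n \<Longrightarrow> T i i (T i i x) = T i i x"
proof -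
  assume i: "i<n"
  have "T i i (T i i x) + T i i (T i i x) = T i i x + T i i x" using R[OF i i i i, of x] by simp
  then have "(T i i (T i i x) - T i i x) + (T i i (T i i x) - T i i x) = 0"
    by (simp add: algebra_simps)
  then have "T i i (T i i x) - T i i x = 0" by (rule twoz)
  then show ?thesis by simp
qed

lemma negfix: "i<n \<Longrightarrow> T i i z = - z \<Longrightarrow> z = 0"
proof -
  assume i: "i<n" and h: "T i i z = - z"
  have "T i i (T i i z) = - T i i z" using h Tneg by simp
  then have "T i i z = - T i i z" using idem[OF i] by simp
  then have "T i i z = 0" by (rule twoz')
  then show ?thesis using h by simp
qed

lemma orth: "i<n \<Longrightarrow> j<n \<Longrightarrow> i \<noteq> j \<Longrightarrow> T i i (T j j x) = 0"
proof -
  assume i: "i<n" and j: "j<n" and ij: "i \<noteq> j"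
  have c: "T i i (T j j y) = - T j j (T i i y)" for y
    using R[OF i i j j, of y] ij by (simp add: eq_neg_iff_add_eq_0)
  have 1: "T i i (T j j (T i i x)) = T i i (T j j x)"
  proof -
    have "T i i (T j j (T i i x)) = - T j j (T i i (T i i x))" by (rule c)
    also have "\<dots> = - T j j (T i i x)" using idem[OF i] by simp
    also have "\<dots> = T i i (T j j x)" using c[of x] by simp
    finally show ?thesis .
  qed
  have c2: "T j j (T i i x) = - T i i (T j j x)" using c[of x] by simp
  have 2: "T i i (T j j (T i i x)) = - T i i (T j j x)"
    unfolding c2 Tneg idem[OF i] by (rule refl)
  from 1 2 have "T i i (T j j x) = - T i i (T j j x)" by simp
  then show ?thesis by (rule twoz')
qed

definition hv :: "(nat \<Rightarrow> 'a) \<Rightarrow> bool" where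
  "hv u \<longleftrightarrow> T 0 0 u = u \<and> T 0 1 u = 0"

lemma H1a: "1<n \<Longrightarrow> hv u \<Longrightarrow> i<n \<Longrightarrow> j<n \<Longrightarrow> i \<noteq> 0 \<Longrightarrow> j \<noteq> 0 \<Longrightarrow> T i j u = 0"
proof -
  assume n: "1<n" and u: "hv u" and i: "i<n" and j: "j<n" and "i \<noteq> 0" "j \<noteq> 0"
  have "T i j (T 0 0 u) + T 0 0 (T i j u) = 0" using R[OF i j, of 0 0 u] n \<open>i\<noteq>0\<close> \<open>j\<noteq>0\<close> by auto
  then have "T 0 0 (T i j u) = - T i j u" using u unfolding hv_def by (simp add: eq_neg_iff_add_eq_0 add.commute)
  then show ?thesis by (rule negfix[rotated]) (use n in simp)
qed

lemma H1: "1<n \<Longrightarrow> hv u \<Longrightarrow> i<n \<Longrightarrow> j<n \<Longrightarrow> T i j u = (if j = 0 then T i 0 u else 0)"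
proof -
  assume n: "1<n" and u: "hv u" and i: "i<n" and j: "j<n"
  show ?thesis
  proof (cases "j = 0")
    case True then show ?thesis by simp
  next
    case jn: False
    show ?thesis
    proof (cases "i = 0")
      case False then show ?thesis using H1a[OF n u i j] jn by simp
    next
      case i0: True
      show ?thesis
      proof (cases "j = 1")
        case True then show ?thesis using u i0 unfolding hv_def by simp
      next
        case False
        have "T 0 1 (T 1 j u) + T 1 j (T 0 1 u) = T 0 j u"
          using R[of 0 1 1 j u] n j jn by simp
        moreover have "T 1 j u = 0" using H1a[OF n u _ j] n jn by simp
        ultimately show ?thesis using u i0 jn unfolding hv_def by simp
      qed
    qed
  qed
qed

lemma H2: "1<n \<Longrightarrow> hv u \<Longrightarrow> i<n \<Longrightarrow> i \<noteq> 0 \<Longrightarrow> T i i (T i 0 u) = T i 0 u"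
proof -
  assume n: "1<n" and u: "hv u" and i: "i<n" and i0: "i \<noteq> 0"
  have "T i i (T i 0 u) + T i 0 (T i i u) = T i 0 u" using R[OF i i i, of 0 u] n i0 by simp
  moreover have "T i i u = 0" using H1[OF n u i i] i0 by simp
  ultimately show ?thesis by simp
qed

lemma H3: "1<n \<Longrightarrow> hv u \<Longrightarrow> i<n \<Longrightarrow> i \<noteq> 0 \<Longrightarrow> k<n \<Longrightarrow> T k 0 (T i 0 u) = 0"
proof -
  assume n: "1<n" and u: "hv u" and i: "i<n" and i0: "i \<noteq> 0" and k: "k<n"
  have n0: "0<n" using n by simp
  show ?thesis
  proof (cases "k = i")
    case True
    have "T i 0 (T i 0 u) + T i 0 (T i 0 u) = 0" using R[OF i n0 i n0, of u] i0 by simp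
    then have "T i 0 (T i 0 u) = 0" by (rule twoz)
    then show ?thesis using True by simp
  next
    case ki: False
    show ?thesis
    proof (cases "k = 0")
      case True
      have "T 0 0 (T i i (T i 0 u)) = 0" using orth[OF n0 i] i0 by simp
      then show ?thesis using H2[OF n u i i0] True by simp
    next
      case False
      have "T k 0 (T i i (T i 0 u)) + T i i (T k 0 (T i 0 u)) = 0"
        using R[OF k n0 i i, of "T i 0 u"] ki i0 by simp
      then have "T i i (T k 0 (T i 0 u)) = - T k 0 (T i 0 u)"
        using H2[OF n u i i0] by (simp add: eq_neg_iff_add_eq_0 add.commute)
      then show ?thesis by (rule negfix[OF i])
    qed
  qed
qed

lemma hmain: "1<n \<Longrightarrow> hv u \<Longrightarrow> i<n \<Longrightarrow> j<n \<Longrightarrow> k<n \<Longrightarrow>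
   T i j (T k 0 u) = (if j = k then T i 0 u else 0)"
proof -
  assume n: "1<n" and u: "hv u" and i: "i<n" and j: "j<n" and k: "k<n"
  have n0: "0<n" using n by simp
  show ?thesis
  proof (cases "j = 0")
    case False
    have "T i j (T k 0 u) + T k 0 (T i j u) = (if j = k then T i 0 u else 0) + (if 0 = i then T k j u else 0)"
      using R[OF i j k n0, of u] by simp
    moreover have "T i j u = 0" "T k j u = 0" using H1[OF n u] i j k False by auto
    ultimately show ?thesis by simp
  next
    case j0: True
    show ?thesis
    proof (cases "k = 0")
      case True then show ?thesis using u j0 unfolding hv_def by simp
    next
      case False then show ?thesis using H3[OF n u k False i] j0 by simp
    qed
  qed
qed

lemma mk_hv: "1<n \<Longrightarrow> T 0 0 z = z \<Longrightarrow> hv (T 0 1 (T 1 0 z))"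
proof -
  assume n: "1<n" and z: "T 0 0 z = z"
  have n0: "0<n" using n by simp
  have a: "T 0 1 (T 0 1 y) = 0" for y
  proof -
    have "T 0 1 (T 0 1 y) + T 0 1 (T 0 1 y) = 0" using R[OF n0 n n0 n, of y] by simp
    then show ?thesis by (rule twoz)
  qed
  have b: "T 0 0 (T 1 0 z) = 0"
  proof -
    have "T 0 0 (T 1 0 z) + T 1 0 (T 0 0 z) = T 1 0 z" using R[OF n0 n0 n n0, of z] by simp
    then show ?thesis using z by simp
  qed
  have c: "T 0 0 (T 0 1 y) + T 0 1 (T 0 0 y) = T 0 1 y" for y
    using R[OF n0 n0 n0 n, of y] by simp
  show ?thesis unfolding hv_def using a c[of "T 1 0 z"] b by simp
qed

lemma split_z: "1<n \<Longrightarrow> T 0 0 z = z \<Longrightarrow> T 0 1 (T 1 0 z) + T 1 0 (T 0 1 z) = z"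
proof -
  assume n: "1<n" and z: "T 0 0 z = z"
  have n0: "0<n" using n by simp
  have "T 0 1 (T 1 0 z) + T 1 0 (T 0 1 z) = T 0 0 z + T 1 1 z" using R[OF n0 n n n0, of z] by simp
  moreover have "T 1 1 z = 0" using orth[OF n n0, of z] z by simp
  ultimately show ?thesis using z by simp
qed

lemma om_self_adj: "i<n \<Longrightarrow> j<n \<Longrightarrow> om n x (T i j x) = 0"
proof -
  assume i: "i<n" and j: "j<n"
  have e1: "om n x (T i j x) = om n (T i j x) x" using adj[OF i j, of x x] by (rule sym)
  also have "\<dots> = - om n x (T i j x)" by (rule om_antisym)
  finally show ?thesis using two by (rule sc_twoz)
qed

end

lemma jrep_transp: "jrep n T \<Longrightarrow> jrep n (\<lambda>i j. T j i)"
proof -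
  assume a: "jrep n T"
  show ?thesis
  proof (rule jrep.intro)
    fix i j k l x assume h: "i<n" "j<n" "k<n" "l<n"
    have e: "T l k (T j i x) + T j i (T l k x) = (if k = j then T l i x else 0) + (if i = l then T j k x else 0)"
      by (rule jrep.R[OF a h(4) h(3) h(2) h(1)])
    have "T j i (T l k x) + T l k (T j i x) = T l k (T j i x) + T j i (T l k x)" by (rule add.commute)
    also have "\<dots> = (if k = j then T l i x else 0) + (if i = l then T j k x else 0)" by (rule e)
    also have "\<dots> = (if j = k then T l i x else 0) + (if l = i then T j k x else 0)"
      by (cases "j = k"; cases "l = i"; simp)
    finally show "T j i (T l k x) + T l k (T j i x) = (if j = k then T l i x else 0) + (if l = i then T j k x else 0)" .
  next
    fix i j x y show "T j i (x + y) = T j i x + T j i y" by (rule jrep.Tadd[OF a])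
  next
    fix i j c x show "T j i (\<lambda>r. c * x r) = (\<lambda>r. c * T j i x r)" by (rule jrep.Tsc[OF a])
  next
    show "(2::'a) \<noteq> 0" by (rule jrep.two[OF a])
  next
    fix i j x y assume "i<n" "j<n" then show "om n (T j i x) y = om n x (T j i y)" using jrep.adj[OF a] by blast
  next
    fix r i j x assume "n+n \<le> r" then show "T j i x r = 0" by (rule jrep.supp[OF a])
  qed
qed



definition ef :: "nat \<Rightarrow> nat \<Rightarrow> 'a::field" where
  "ef c = (\<lambda>r. if r = c then 1 else 0)"

lemma om_nondeg:
  fixes x :: "nat \<Rightarrow> 'a::field"
  assumes x: "x \<noteq> 0" and s: "\<And>r. n+n \<le> r \<Longrightarrow> x r = 0"
  shows "\<exists>h. om n x h \<noteq> 0"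
proof -
  obtain r where r: "x r \<noteq> 0" using x by (metis ext zero_fun_apply)
  have rN: "r < n+n" using s r by (meson not_less)
  show ?thesis
  proof (cases "r < n")
    case True
    have "om n x (ef (n+r)) = (\<Sum>s<n. if s = r then x s else 0)"
      unfolding om_def ef_def by (rule sum.cong) auto
    also have "\<dots> = x r" using True by simp
    finally show ?thesis using r by metis
  next
    case False
    have "om n x (ef (r-n)) = (\<Sum>s<n. if s = r - n then - x (n + s) else 0)"
      unfolding om_def ef_def by (rule sum.cong) (use False rN in auto)
    also have "\<dots> = - x r" using False rN by simp
    finally show ?thesis using r by (metis neg_equal_0_iff_equal)
  qed
qed

lemma om_ef: "c < n+n \<Longrightarrow> d < n+n \<Longrightarrow>
  om n (ef c) (ef d) = (if d = n + c then 1 else if c = n + d then -1 else (0::'a::field))"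
proof -
  assume c: "c < n+n" and d: "d < n+n"
  have "om n (ef c) (ef d) = (\<Sum>s<n. (if s = c then (if d = n + c then 1 else 0) else 0)
       - (if s = d then (if c = n + d then 1 else 0) else (0::'a)))"
    unfolding om_def ef_def by (rule sum.cong) auto
  also have "\<dots> = (if c < n then (if d = n + c then 1 else 0) else 0) - (if d < n then (if c = n + d then 1 else 0) else 0)"
    by (simp add: sum_subtractf)
  also have "\<dots> = (if d = n + c then 1 else if c = n + d then -1 else (0::'a))"
    using c d by auto
  finally show ?thesis .
qed

context jrep begin

definition GP :: "(nat \<Rightarrow> 'a) \<Rightarrow> (nat \<Rightarrow> 'a) \<Rightarrow> bool" where
  "GP u w \<longleftrightarrow> (\<forall>i<n. \<forall>j<n. \<forall>k<n. T i j (T k 0 u) = (if j = k then T i 0 u else 0)) \<and>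
     (\<forall>i<n. \<forall>j<n. \<forall>k<n. T i j (T 0 k w) = (if i = k then T 0 j w else 0)) \<and>
     om n u (T 0 0 w) = 1"

lemma GP_from:
  assumes n: "1<n" and u: "hv u" and w: "T 0 0 w = w" "T 1 0 w = 0" and c: "om n u w \<noteq> 0"
  shows "\<exists>u w. GP u w"
proof -
  interpret tr: jrep n "\<lambda>i j. T j i" by (rule jrep_transp) (rule jrep_axioms)
  define c where "c = om n u w"
  define w' where "w' = (\<lambda>r. (1/c) * w r)"
  have w'1: "T 0 0 w' = w'" unfolding w'_def Tsc using w by simp
  have w'2: "T 1 0 w' = 0" unfolding w'_def Tsc using w by (simp add: zero_fun_def)
  have hv': "tr.hv w'" unfolding tr.hv_def using w'1 w'2 by simp
  have "GP u w'" unfolding GP_def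
  proof (intro conjI allI impI)
    fix i j k assume "i<n" "j<n" "k<n"
    then show "T i j (T k 0 u) = (if j = k then T i 0 u else 0)" using hmain[OF n u] by simp
  next
    fix i j k assume "i<n" "j<n" "k<n"
    then show "T i j (T 0 k w') = (if i = k then T 0 j w' else 0)" using tr.hmain[OF n hv', of j i k] by simp
  next
    have "om n u (T 0 0 w') = om n u w'" using w'1 by simp
    also have "\<dots> = (1/c) * c" unfolding w'_def om_sc2 c_def by simp
    also have "\<dots> = 1" using c c_def by simp
    finally show "om n u (T 0 0 w') = 1" .
  qed
  then show ?thesis by blast
qed

lemma exists_GP:
  assumes n: "0<n" and g: "T 0 0 g \<noteq> 0"
  shows "\<exists>u w. GP u w"
proof -
  interpret tr: jrep n "\<lambda>i j. T j i" by (rule jrep_transp) (rule jrep_axioms)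
  define z1 where "z1 = T 0 0 g"
  have z1: "T 0 0 z1 = z1" unfolding z1_def using idem[OF n] by simp
  obtain h where h: "om n z1 h \<noteq> 0" using om_nondeg[of z1 n] g supp unfolding z1_def by blast
  define z2 where "z2 = T 0 0 h"
  have z2: "T 0 0 z2 = z2" unfolding z2_def using idem[OF n] by simp
  have z12: "om n z1 z2 \<noteq> 0"
  proof -
    have "om n z1 z2 = om n (T 0 0 z1) h" unfolding z2_def using adj[OF n n, of z1 h] by simp
    then show ?thesis using z1 h by simp
  qed
  show ?thesis
  proof (cases "n = 1")
    case True
    define c where "c = om n z1 z2"
    define w where "w = (\<lambda>r. (1/c) * z2 r)"
    have w1: "T 0 0 w = w" unfolding w_def Tsc using z2 by simp
    have "GP z1 w" unfolding GP_def
    proof (intro conjI allI impI)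
      fix i j k assume "i<n" "j<n" "k<n"
      then have "i = 0" "j = 0" "k = 0" using True by auto
      then show "T i j (T k 0 z1) = (if j = k then T i 0 z1 else 0)" using idem[OF n] by simp
    next
      fix i j k assume "i<n" "j<n" "k<n"
      then have "i = 0" "j = 0" "k = 0" using True by auto
      then show "T i j (T 0 k w) = (if i = k then T 0 j w else 0)" using idem[OF n] by simp
    next
      have "om n z1 (T 0 0 w) = om n z1 w" using w1 by simp
      also have "\<dots> = (1/c) * c" unfolding w_def om_sc2 c_def by simp
      also have "\<dots> = 1" using z12 c_def by simp
      finally show "om n z1 (T 0 0 w) = 1" .
    qed
    then show ?thesis by blast
  next
    case False
    then have n1: "1 < n" using n by simp
    define u1 where "u1 = T 0 1 (T 1 0 z1)"
    define u2 where "u2 = T 0 1 (T 1 0 z2)"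
    define w1 where "w1 = T 1 0 (T 0 1 z1)"
    define w2 where "w2 = T 1 0 (T 0 1 z2)"
    have hu1: "hv u1" unfolding u1_def by (rule mk_hv[OF n1 z1])
    have hu2: "hv u2" unfolding u2_def by (rule mk_hv[OF n1 z2])
    have hw1: "tr.hv w1" unfolding w1_def using tr.mk_hv[OF n1, of z1] z1 by simp
    have hw2: "tr.hv w2" unfolding w2_def using tr.mk_hv[OF n1, of z2] z2 by simp
    have s1: "z1 = u1 + w1" unfolding u1_def w1_def using split_z[OF n1 z1] by simp
    have s2: "z2 = u2 + w2" unfolding u2_def w2_def using split_z[OF n1 z2] by simp
    have uu: "om n u1 u2 = 0"
    proof -
      have "om n u1 u2 = om n (T 1 0 z1) (T 0 1 u2)" unfolding u1_def using adj[OF n n1, of "T 1 0 z1" u2] by simp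
      then show ?thesis using hu2 unfolding hv_def by simp
    qed
    have ww: "om n w1 w2 = 0"
    proof -
      have "om n w1 w2 = om n (T 0 1 z1) (T 1 0 w2)" unfolding w1_def using adj[OF n1 n, of "T 0 1 z1" w2] by simp
      then show ?thesis using hw2 unfolding tr.hv_def by simp
    qed
    have "om n z1 z2 = om n u1 u2 + om n u1 w2 + (om n w1 u2 + om n w1 w2)"
      unfolding s1 s2 om_add1 om_add2 by (simp add: algebra_simps)
    then have sum: "om n u1 w2 + om n w1 u2 \<noteq> 0" using z12 uu ww by simp
    show ?thesis
    proof (cases "om n u1 w2 = 0")
      case False
      show ?thesis by (rule GP_from[OF n1 hu1 _ _ False]) (use hw2 in \<open>auto simp: tr.hv_def\<close>)
    next
      case True
      then have "om n w1 u2 \<noteq> 0" using sum by simp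
      then have "om n u2 w1 \<noteq> 0" using om_antisym[of n w1 u2] by simp
      then show ?thesis by (intro GP_from[OF n1 hu2]) (use hw1 in \<open>auto simp: tr.hv_def\<close>)
    qed
  qed
qed

context
  fixes u w assumes gp: "GP u w"
begin

lemma actu: "i<n \<Longrightarrow> j<n \<Longrightarrow> k<n \<Longrightarrow> T i j (T k 0 u) = (if j = k then T i 0 u else 0)"
  using gp unfolding GP_def by blast
lemma actw: "i<n \<Longrightarrow> j<n \<Longrightarrow> k<n \<Longrightarrow> T i j (T 0 k w) = (if i = k then T 0 j w else 0)"
  using gp unfolding GP_def by blast
lemma om1: "om n u (T 0 0 w) = 1"
  using gp unfolding GP_def by blast

lemma g1: "i<n \<Longrightarrow> j<n \<Longrightarrow> om n (T i 0 u) (T j 0 u) = 0"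
proof -
  assume i: "i<n" and j: "j<n"
  have n: "0<n" using i by simp
  have "om n (T i 0 u) (T j 0 u) = om n u (T i 0 (T j 0 u))" using adj[OF i n] by simp
  also have "\<dots> = (if j = 0 then om n u (T i 0 u) else 0)" using actu[OF i n j] by simp
  also have "\<dots> = 0" using om_self_adj[OF i n] by simp
  finally show ?thesis .
qed

lemma g2: "i<n \<Longrightarrow> j<n \<Longrightarrow> om n (T i 0 u) (T 0 j w) = (if i = j then 1 else 0)"
proof -
  assume i: "i<n" and j: "j<n"
  have n: "0<n" using i by simp
  have "om n (T i 0 u) (T 0 j w) = om n u (T i 0 (T 0 j w))" using adj[OF i n] by simp
  also have "\<dots> = (if i = j then om n u (T 0 0 w) else 0)" using actw[OF i n j] by simp
  also have "\<dots> = (if i = j then 1 else 0)" using om1 by simp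
  finally show ?thesis .
qed

lemma g3: "i<n \<Longrightarrow> j<n \<Longrightarrow> om n (T 0 i w) (T 0 j w) = 0"
proof -
  assume i: "i<n" and j: "j<n"
  have n: "0<n" using i by simp
  have "om n (T 0 i w) (T 0 j w) = om n w (T 0 i (T 0 j w))" using adj[OF n i] by simp
  also have "\<dots> = (if j = 0 then om n w (T 0 i w) else 0)" using actw[OF n i j] by simp
  also have "\<dots> = 0" using om_self_adj[OF n i] by simp
  finally show ?thesis .
qed

definition colf :: "nat \<Rightarrow> nat \<Rightarrow> 'a" where
  "colf c = (if c < n then T c 0 u else T 0 (c - n) w)"

lemma colf_supp: "n+n \<le> r \<Longrightarrow> colf c r = 0"
  unfolding colf_def using supp by simp

lemma gram: "c < n+n \<Longrightarrow> d < n+n \<Longrightarrow> om n (colf c) (colf d) = om n (ef c) (ef d)"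
proof -
  assume c: "c < n+n" and d: "d < n+n"
  show ?thesis
  proof (cases "c < n")
    case c1: True
    show ?thesis
    proof (cases "d < n")
      case True then show ?thesis using c1 c d g1 om_ef[OF c d] unfolding colf_def by simp
    next
      case False then show ?thesis using c1 c d g2[OF c1, of "d-n"] om_ef[OF c d] unfolding colf_def by auto
    qed
  next
    case c1: False
    show ?thesis
    proof (cases "d < n")
      case True
      have e: "c = n + d \<longleftrightarrow> d = c - n" using c1 by auto
      have "om n (colf c) (colf d) = - om n (colf d) (colf c)" by (rule om_antisym)
      also have "\<dots> = - om n (T d 0 u) (T 0 (c-n) w)" using True c1 unfolding colf_def by simp
      also have "\<dots> = (if d = c - n then -1 else 0)" using g2[OF True, of "c-n"] c c1 by simp
      also have "\<dots> = om n (ef c) (ef d)" unfolding om_ef[OF c d] using e True by auto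
      finally show ?thesis .
    next
      case False then show ?thesis using c1 c d g3[of "c-n" "d-n"] om_ef[OF c d] unfolding colf_def by auto
    qed
  qed
qed

lemma act_colf: "i<n \<Longrightarrow> j<n \<Longrightarrow> c < n+n \<Longrightarrow>
  T i j (colf c) = (if c < n then (if c = j then colf i else 0) else (if c - n = i then colf (n + j) else 0))"
  unfolding colf_def using actu actw by auto

end
end



definition mv :: "'a::field mat \<Rightarrow> (nat \<Rightarrow> 'a) \<Rightarrow> nat \<Rightarrow> 'a" where
  "mv A g = (\<lambda>r. if r < dim_row A then (\<Sum>c<dim_col A. A $$ (r,c) * g c) else 0)"

lemma mv_add: "mv A (x + y) = mv A x + mv A y"
  unfolding mv_def by (rule ext) (simp add: distrib_left sum.distrib)

lemma mv_sc: "mv A (\<lambda>r. c * x r) = (\<lambda>r. c * mv A x r)"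
  unfolding mv_def by (rule ext) (simp add: sum_distrib_left algebra_simps)

lemma mv_mult:
  assumes A: "A \<in> carrier_mat m k" and B: "B \<in> carrier_mat k l"
  shows "mv (A * B) x = mv A (mv B x)"
proof (rule ext)
  fix r
  show "mv (A * B) x r = mv A (mv B x) r"
  proof (cases "r < m")
    case True
    have "mv (A * B) x r = (\<Sum>c<l. (\<Sum>j<k. A $$ (r,j) * B $$ (j,c)) * x c)"
      unfolding mv_def using A B True by (simp add: scalar_prod_def row_def col_def lessThan_atLeast0)
    also have "\<dots> = (\<Sum>j<k. A $$ (r,j) * (\<Sum>c<l. B $$ (j,c) * x c))"
      by (simp add: sum_distrib_left sum_distrib_right mult.assoc sum.swap[of _ "{..<l}"])
    also have "\<dots> = mv A (mv B x) r"
      unfolding mv_def using A B True by simp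
    finally show ?thesis .
  next
    case False then show ?thesis using A B unfolding mv_def by simp
  qed
qed

lemma mv_addm: "A \<in> carrier_mat m k \<Longrightarrow> B \<in> carrier_mat m k \<Longrightarrow> mv (A + B) x = mv A x + mv B x"
  unfolding mv_def by (rule ext) (simp add: distrib_right sum.distrib)

lemma mv_smultm: "mv (c \<cdot>\<^sub>m A) x = (\<lambda>r. c * mv A x r)"
  unfolding mv_def by (rule ext) (simp add: sum_distrib_left algebra_simps)

lemma mv_zero: "mv (0\<^sub>m m k) x = 0"
  unfolding mv_def by (rule ext) simp

lemma mv_ef: "A \<in> carrier_mat m k \<Longrightarrow> c < k \<Longrightarrow> mv A (ef c) = (\<lambda>r. if r < m then A $$ (r,c) else 0)"
  unfolding mv_def ef_def by (rule ext) (simp add: if_distrib cong: if_cong)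

lemma mv_eq: "A \<in> carrier_mat m k \<Longrightarrow> B \<in> carrier_mat m k \<Longrightarrow> (\<And>c. c < k \<Longrightarrow> mv A (ef c) = mv B (ef c)) \<Longrightarrow> A = B"
proof -
  assume A: "A \<in> carrier_mat m k" and B: "B \<in> carrier_mat m k" and h: "\<And>c. c < k \<Longrightarrow> mv A (ef c) = mv B (ef c)"
  show "A = B"
  proof (rule eq_matI)
    fix i j assume i: "i < dim_row B" and j: "j < dim_col B"
    have "mv A (ef j) i = mv B (ef j) i" using h j B by simp
    then show "A $$ (i,j) = B $$ (i,j)" using mv_ef[OF A, of j] mv_ef[OF B, of j] i j B by simp
  qed (use A B in auto)
qed

lemma mv_supp: "dim_row A \<le> r \<Longrightarrow> mv A x r = 0"
  unfolding mv_def by simp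

lemma mv_cong: "(\<And>c. c < dim_col A \<Longrightarrow> x c = y c) \<Longrightarrow> mv A x = mv A y"
  unfolding mv_def by (rule ext) simp

lemma sum_delta_aux: "(\<Sum>c<(N::nat). (if r = c then 1 else 0) * (x c::'a::field)) = (if r < N then x r else 0)"
proof -
  have "(\<Sum>c<N. (if r = c then 1 else 0) * x c) = (\<Sum>c<N. if c = r then x c else 0)" by (rule sum.cong) auto
  also have "\<dots> = (if r \<in> {..<N} then x r else 0)" by (rule sum.delta[OF finite_lessThan])
  finally show ?thesis by simp
qed

lemma mv_one: "mv (1\<^sub>m N) x = (\<lambda>r. if r < N then x r else 0)"
  unfolding mv_def by (rule ext) (simp add: sum_delta_aux)

lemma om_cong: "(\<And>r. r < n+n \<Longrightarrow> x r = x' r) \<Longrightarrow> (\<And>r. r < n+n \<Longrightarrow> y r = y' r) \<Longrightarrow> om n x y = om n x' y'"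
  unfolding om_def by (rule sum.cong) auto

lemma om_ef1: "c < n+n \<Longrightarrow> om n (ef c) y = (if c < n then y (n+c) else - y (c-n))"
proof -
  assume c: "c < n+n"
  have "c - n < n" using c by arith
  have "om n (ef c) y = (\<Sum>s<n. (if s = c then y (n+s) else 0) - (if s = c - n \<and> n \<le> c then y s else 0))"
    unfolding om_def ef_def
  proof (rule sum.cong)
    fix s assume sn: "s \<in> {..<n}"
    have e: "(n + s = c) \<longleftrightarrow> (s = c - n \<and> n \<le> c)" by arith
    show "(if s = c then 1 else 0) * y (n + s) - (if n + s = c then 1 else 0) * y s =
        (if s = c then y (n+s) else 0) - (if s = c - n \<and> n \<le> c then y s else 0)"
      using sn unfolding e by auto
  qed simp
  also have "\<dots> = (if c < n then y (n+c) else 0) - (if n \<le> c then y (c-n) else 0)"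
    using c \<open>c - n < n\<close> by (simp add: sum_subtractf)
  finally show ?thesis by auto
qed

lemma om_ef2: "d < n+n \<Longrightarrow> om n x (ef d) = (if d < n then - x (n+d) else x (d-n))"
  using om_ef1[of d n x] om_antisym[of n x "ef d"] by (auto split: if_splits)

lemma sum_split2: "(\<Sum>c<(n::nat)+n. F c) = (\<Sum>c<n. F c) + (\<Sum>c<n. F (n+c))"
proof -
  have e: "{..<n+n} = {..<n} \<union> (\<lambda>c. n+c) ` {..<n}"
  proof
    show "{..<n+n} \<subseteq> {..<n} \<union> (\<lambda>c. n+c) ` {..<n}"
    proof
      fix x assume "x \<in> {..<n+n}"
      then show "x \<in> {..<n} \<union> (\<lambda>c. n+c) ` {..<n}"
        by (cases "x < n") (auto intro: image_eqI[of _ _ "x - n"])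
    qed
  qed auto
  have "(\<Sum>c<n+n. F c) = (\<Sum>c<n. F c) + (\<Sum>c\<in>(\<lambda>c. n+c) ` {..<n}. F c)"
    unfolding e by (rule sum.union_disjoint) auto
  also have "(\<Sum>c\<in>(\<lambda>c. n+c) ` {..<n}. F c) = (\<Sum>c<n. F (n+c))"
    by (subst sum.reindex) (auto simp: inj_on_def)
  finally show ?thesis .
qed

definition hrel :: "nat \<Rightarrow> 'a::field mat \<Rightarrow> bool" where
  "hrel n Y \<longleftrightarrow> (\<forall>r<n. \<forall>c<n. Y $$ (n+c, n+r) = Y $$ (r,c) \<and> Y $$ (r, n+c) = - Y $$ (c, n+r)
      \<and> Y $$ (n+r, c) = - Y $$ (n+c, r))"

lemma Hj_iff: "Y \<in> Hj n \<longleftrightarrow> Y \<in> carrier_mat (n+n) (n+n) \<and> hrel n Y"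
proof
  assume "Y \<in> Hj n"
  then obtain A B C where Y: "Y = four_block_mat A B C (transpose_mat A)" and
    c: "A \<in> carrier_mat n n" "B \<in> carrier_mat n n" "C \<in> carrier_mat n n"
    and sk: "transpose_mat B = - B" "transpose_mat C = - C"
    unfolding Hj_def by blast
  have car: "Y \<in> carrier_mat (n+n) (n+n)" using Y c by simp
  have hB: "B $$ (c', r) = - B $$ (r, c')" if "r<n" "c'<n" for r c'
  proof -
    have "transpose_mat B $$ (r, c') = (- B) $$ (r, c')" using sk by simp
    then show ?thesis using that c by simp
  qed
  have hC: "C $$ (c', r) = - C $$ (r, c')" if "r<n" "c'<n" for r c'
  proof -
    have "transpose_mat C $$ (r, c') = (- C) $$ (r, c')" using sk by simp
    then show ?thesis using that c by simp
  qed
  have idx: "Y $$ (i,j) = A $$ (i,j)" "Y $$ (i,n+j) = B $$ (i,j)" "Y $$ (n+i,j) = C $$ (i,j)"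
     "Y $$ (n+i,n+j) = A $$ (j,i)" if "i<n" "j<n" for i j
    unfolding Y using c that by simp_all
  have "hrel n Y" unfolding hrel_def
  proof (intro allI impI conjI)
    fix r c' assume r: "r<n" and c': "c'<n"
    show "Y $$ (n + c', n + r) = Y $$ (r, c')" using idx[OF c' r] idx[OF r c'] by simp
    have "Y $$ (c', n + r) = - Y $$ (r, n + c')" using idx[OF c' r] idx[OF r c'] hB[OF r c'] by simp
    then show "Y $$ (r, n + c') = - Y $$ (c', n + r)" by simp
    have "Y $$ (n + c', r) = - Y $$ (n + r, c')" using idx[OF c' r] idx[OF r c'] hC[OF r c'] by simp
    then show "Y $$ (n + r, c') = - Y $$ (n + c', r)" by simp
  qed
  then show "Y \<in> carrier_mat (n+n) (n+n) \<and> hrel n Y" using car by simp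
next
  assume h: "Y \<in> carrier_mat (n+n) (n+n) \<and> hrel n Y"
  define A where "A = mat n n (\<lambda>(r,c). Y $$ (r,c))"
  define B where "B = mat n n (\<lambda>(r,c). Y $$ (r,n+c))"
  define C where "C = mat n n (\<lambda>(r,c). Y $$ (n+r,c))"
  have c: "A \<in> carrier_mat n n" "B \<in> carrier_mat n n" "C \<in> carrier_mat n n"
    unfolding A_def B_def C_def by auto
  have rel: "\<And>r c. r<n \<Longrightarrow> c<n \<Longrightarrow> Y $$ (n+c, n+r) = Y $$ (r,c) \<and> Y $$ (r, n+c) = - Y $$ (c, n+r)
      \<and> Y $$ (n+r, c) = - Y $$ (n+c, r)"
    using h unfolding hrel_def by blast
  have "Y = four_block_mat A B C (transpose_mat A)"
  proof (rule eq_matI)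
    fix i j assume i: "i < dim_row (four_block_mat A B C (transpose_mat A))"
      and j: "j < dim_col (four_block_mat A B C (transpose_mat A))"
    then have i': "i < n+n" and j': "j < n+n" using c by auto
    show "Y $$ (i,j) = four_block_mat A B C (transpose_mat A) $$ (i,j)"
    proof (cases "i < n"; cases "j < n")
      assume "i < n" "j < n"
      then show ?thesis using c unfolding A_def by simp
    next
      assume "i < n" "\<not> j < n"
      then have a: "j - n < n" "n + (j - n) = j" using j' by arith+
      show ?thesis using \<open>i < n\<close> \<open>\<not> j < n\<close> c a unfolding B_def by simp
    next
      assume "\<not> i < n" "j < n"
      then have a: "i - n < n" "n + (i - n) = i" using i' by arith+
      show ?thesis using \<open>\<not> i < n\<close> \<open>j < n\<close> c a unfolding C_def by simp
    next
      assume "\<not> i < n" "\<not> j < n"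
      then have a: "i - n < n" "j - n < n" "n + (i - n) = i" "n + (j - n) = j" using i' j' by arith+
      have "Y $$ (i,j) = Y $$ (j-n, i-n)" using rel[OF a(2) a(1)] a(3,4) by simp
      then show ?thesis using i' j' c a \<open>\<not> i < n\<close> \<open>\<not> j < n\<close> unfolding A_def by simp
    qed
  qed (use h c in auto)
  moreover have "transpose_mat B = - B"
  proof (rule eq_matI)
    fix i j assume "i < dim_row (- B)" "j < dim_col (- B)"
    then have i: "i<n" and j: "j<n" using c by auto
    have "Y $$ (i, n+j) = - Y $$ (j, n+i)" using rel[OF i j] by blast
    then show "transpose_mat B $$ (i,j) = (- B) $$ (i,j)" using i j c unfolding B_def by simp
  qed (use c in auto)
  moreover have "transpose_mat C = - C"
  proof (rule eq_matI)
    fix i j assume "i < dim_row (- C)" "j < dim_col (- C)"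
    then have i: "i<n" and j: "j<n" using c by auto
    have "Y $$ (n+i, j) = - Y $$ (n+j, i)" using rel[OF i j] by blast
    then show "transpose_mat C $$ (i,j) = (- C) $$ (i,j)" using i j c unfolding C_def by simp
  qed (use c in auto)
  ultimately show "Y \<in> Hj n" unfolding Hj_def using c by blast
qed



lemma mv_split: "Y \<in> carrier_mat (n+n) (n+n) \<Longrightarrow> r < n+n \<Longrightarrow>
   mv Y g r = (\<Sum>c<n. Y $$ (r,c) * g c + Y $$ (r,n+c) * g (n+c))"
  unfolding mv_def by (simp add: sum_split2 sum.distrib)

lemma Hj_adj:
  assumes Y: "Y \<in> Hj n"
  shows "om n (mv Y g) h = om n g (mv Y h)"
proof -
  have car: "Y \<in> carrier_mat (n+n) (n+n)" and hr: "hrel n Y" using Y Hj_iff by auto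
  define F where "F r c = Y$$(r,c) * g c * h (n+r) + Y$$(r,n+c) * g (n+c) * h (n+r)
     - Y$$(n+r,c) * g c * h r - Y$$(n+r,n+c) * g (n+c) * h r" for r c
  define G where "G r c = g r * Y$$(n+r,c) * h c + g r * Y$$(n+r,n+c) * h (n+c)
     - g (n+r) * Y$$(r,c) * h c - g (n+r) * Y$$(r,n+c) * h (n+c)" for r c
  have L: "om n (mv Y g) h = (\<Sum>r<n. \<Sum>c<n. F r c)"
    unfolding om_def
  proof (rule sum.cong)
    fix r assume "r \<in> {..<n}"
    then have r1: "r < n+n" and r2: "n+r < n+n" by auto
    have "mv Y g r * h (n+r) - mv Y g (n+r) * h r =
      (\<Sum>c<n. (Y $$ (r,c) * g c + Y $$ (r,n+c) * g (n+c)) * h (n+r))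
      - (\<Sum>c<n. (Y $$ (n+r,c) * g c + Y $$ (n+r,n+c) * g (n+c)) * h r)"
      unfolding mv_split[OF car r1] mv_split[OF car r2] by (simp only: sum_distrib_right)
    also have "\<dots> = (\<Sum>c<n. F r c)" unfolding sum_subtractf[symmetric] F_def
      by (rule sum.cong) (simp_all add: ring_distribs mult.assoc)
    finally show "mv Y g r * h (n+r) - mv Y g (n+r) * h r = (\<Sum>c<n. F r c)" .
  qed simp
  have R: "om n g (mv Y h) = (\<Sum>r<n. \<Sum>c<n. G r c)"
    unfolding om_def
  proof (rule sum.cong)
    fix r assume "r \<in> {..<n}"
    then have r1: "r < n+n" and r2: "n+r < n+n" by auto
    have "g r * mv Y h (n+r) - g (n+r) * mv Y h r =
      (\<Sum>c<n. g r * (Y $$ (n+r,c) * h c + Y $$ (n+r,n+c) * h (n+c)))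
      - (\<Sum>c<n. g (n+r) * (Y $$ (r,c) * h c + Y $$ (r,n+c) * h (n+c)))"
      unfolding mv_split[OF car r1] mv_split[OF car r2] by (simp only: sum_distrib_left)
    also have "\<dots> = (\<Sum>c<n. G r c)" unfolding sum_subtractf[symmetric] G_def
      by (rule sum.cong) (simp_all add: ring_distribs mult.assoc)
    finally show "g r * mv Y h (n+r) - g (n+r) * mv Y h r = (\<Sum>c<n. G r c)" .
  qed simp
  have FG: "F c r = G r c" if r: "r<n" and c: "c<n" for r c
  proof -
    have i1: "Y $$ (n+r, n+c) = Y $$ (c,r) \<and> Y $$ (c, n+r) = - Y $$ (r, n+c)
      \<and> Y $$ (n+c, r) = - Y $$ (n+r, c)" using hr c r unfolding hrel_def by blast
    have i2: "Y $$ (n+c, n+r) = Y $$ (r,c)" using hr c r unfolding hrel_def by blast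
    have e1: "Y$$(c,r) = Y$$(n+r,n+c)" and e2: "Y$$(c,n+r) = - Y$$(r,n+c)"
      and e3: "Y$$(n+c,r) = - Y$$(n+r,c)" using i1 by simp_all
    have e4: "Y$$(n+c,n+r) = Y$$(r,c)" by (rule i2)
    show ?thesis unfolding F_def G_def e1 e2 e3 e4 by (simp add: algebra_simps)
  qed
  have "(\<Sum>r<n. \<Sum>c<n. F r c) = (\<Sum>c<n. \<Sum>r<n. F r c)" by (rule sum.swap)
  also have "\<dots> = (\<Sum>r<n. \<Sum>c<n. G r c)"
    by (rule sum.cong[OF refl], rule sum.cong[OF refl]) (simp add: FG)
  finally show ?thesis using L R by simp
qed

lemma adj_Hj:
  assumes car: "Y \<in> carrier_mat (n+n) (n+n)" and adj: "\<And>g h. om n (mv Y g) h = om n g (mv Y h)"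
  shows "Y \<in> Hj n"
proof -
  have key: "(if d < n then - (if n+d < n+n then Y$$(n+d,a) else 0) else (if d-n < n+n then Y$$(d-n,a) else 0))
     = (if a < n then (if n+a < n+n then Y$$(n+a,d) else 0) else - (if a-n < n+n then Y$$(a-n,d) else 0))"
    if a: "a < n+n" and d: "d < n+n" for a d
  proof -
    have "om n (mv Y (ef a)) (ef d) = om n (ef a) (mv Y (ef d))" by (rule adj)
    then show ?thesis unfolding om_ef1[OF a] om_ef2[OF d] mv_ef[OF car a] mv_ef[OF car d] by simp
  qed
  have "hrel n Y" unfolding hrel_def
  proof (intro allI impI conjI)
    fix r c assume r: "r<n" and c: "c<n"
    have a1: "c < n+n" "n+r < n+n" "n+c < n+n" "r < n+n" using r c by auto
    show "Y $$ (n+c, n+r) = Y $$ (r,c)" using key[OF a1(1) a1(2)] r c by simp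
    show "Y $$ (r, n+c) = - Y $$ (c, n+r)" using key[OF a1(3) a1(2)] r c by simp
    have "- Y $$ (n+r, c) = Y $$ (n+c, r)" using key[OF a1(1) a1(4)] r c by simp
    then show "Y $$ (n+r, c) = - Y $$ (n+c, r)" by (metis minus_minus)
  qed
  then show ?thesis using Hj_iff car by blast
qed



lemma om_exp1: "om n x y = (\<Sum>k<n+n. x k * om n (ef k) y)"
proof -
  have "(\<Sum>k<n+n. x k * om n (ef k) y) = (\<Sum>k<n+n. x k * (if k < n then y (n+k) else - y (k-n)))"
    by (rule sum.cong) (simp_all add: om_ef1)
  also have "\<dots> = (\<Sum>k<n. x k * y (n+k)) + (\<Sum>k<n. x (n+k) * (- y k))"
    unfolding sum_split2 by simp
  also have "\<dots> = om n x y" unfolding om_def by (simp add: sum_subtractf sum_negf)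
  finally show ?thesis by simp
qed

lemma om_expP:
  fixes colf :: "nat \<Rightarrow> nat \<Rightarrow> 'a::field" and n :: nat
  defines "Pm \<equiv> mat (n+n) (n+n) (\<lambda>(r,c). colf c r)"
  shows "om n (mv Pm g) (mv Pm h) = (\<Sum>c<n+n. \<Sum>d<n+n. g c * h d * om n (colf c) (colf d))"
proof -
  let ?N = "n+n"
  have mvP: "mv Pm x r = (\<Sum>c<?N. colf c r * x c)" if "r < ?N" for x r
    using that unfolding mv_def Pm_def by simp
  define F where "F r c d = g c * h d * (colf c r * colf d (n+r) - colf c (n+r) * colf d r)" for r c d
  have "om n (mv Pm g) (mv Pm h) = (\<Sum>r<n. (\<Sum>c<?N. colf c r * g c) * (\<Sum>d<?N. colf d (n+r) * h d)
       - (\<Sum>c<?N. colf c (n+r) * g c) * (\<Sum>d<?N. colf d r * h d))"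
    unfolding om_def by (rule sum.cong) (simp_all add: mvP)
  also have "\<dots> = (\<Sum>r<n. \<Sum>c<?N. \<Sum>d<?N. F r c d)"
  proof (rule sum.cong[OF refl])
    fix r
    show "(\<Sum>c<?N. colf c r * g c) * (\<Sum>d<?N. colf d (n+r) * h d)
       - (\<Sum>c<?N. colf c (n+r) * g c) * (\<Sum>d<?N. colf d r * h d) = (\<Sum>c<?N. \<Sum>d<?N. F r c d)"
      unfolding sum_product sum_subtractf[symmetric] F_def
      by (rule sum.cong[OF refl], rule sum.cong[OF refl]) (simp add: algebra_simps)
  qed
  also have "\<dots> = (\<Sum>c<?N. \<Sum>r<n. \<Sum>d<?N. F r c d)" by (rule sum.swap)
  also have "\<dots> = (\<Sum>c<?N. \<Sum>d<?N. \<Sum>r<n. F r c d)"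
    by (rule sum.cong[OF refl]) (rule sum.swap)
  also have "\<dots> = (\<Sum>c<?N. \<Sum>d<?N. g c * h d * om n (colf c) (colf d))"
    unfolding om_def F_def sum_distrib_left by simp
  finally show ?thesis .
qed

lemma P_exists:
  fixes colf :: "nat \<Rightarrow> nat \<Rightarrow> 'a::field" and n :: nat
  assumes gram: "\<And>c d. c < n+n \<Longrightarrow> d < n+n \<Longrightarrow> om n (colf c) (colf d) = om n (ef c) (ef d)"
  defines "Pm \<equiv> mat (n+n) (n+n) (\<lambda>(r,c). colf c r)"
  shows "\<exists>Q. Q \<in> carrier_mat (n+n) (n+n) \<and> Q * Pm = 1\<^sub>m (n+n) \<and> Pm * Q = 1\<^sub>m (n+n) \<and>
     (\<forall>g h. om n (mv Pm g) (mv Pm h) = om n g h)"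
proof -
  let ?N = "n+n"
  define I where "I = mat ?N ?N (\<lambda>(r,c). ef c r :: 'a)"
  have mvI: "mv I g r = g r" if "r < ?N" for g r
  proof -
    have "mv I g r = (\<Sum>c<?N. (if r = c then 1 else 0) * g c)" using that unfolding mv_def I_def ef_def by simp
    then show ?thesis using sum_delta_aux[where N="?N" and r=r and x=g] that by simp
  qed
  have pres: "om n (mv Pm g) (mv Pm h) = om n g h" for g h
  proof -
    have "om n (mv Pm g) (mv Pm h) = (\<Sum>c<?N. \<Sum>d<?N. g c * h d * om n (colf c) (colf d))"
      unfolding Pm_def by (rule om_expP)
    also have "\<dots> = (\<Sum>c<?N. \<Sum>d<?N. g c * h d * om n (ef c) (ef d))"
      by (rule sum.cong[OF refl], rule sum.cong[OF refl]) (simp add: gram)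
    also have "\<dots> = om n (mv I g) (mv I h)"
      unfolding I_def by (rule om_expP[symmetric])
    also have "\<dots> = om n g h" by (rule om_cong) (simp_all add: mvI)
    finally show ?thesis .
  qed
  define Q where "Q = mat ?N ?N (\<lambda>(r,k). if r < n then om n (ef k) (colf (n+r)) else - om n (ef k) (colf (r-n)))"
  have Qc: "Q \<in> carrier_mat ?N ?N" unfolding Q_def by simp
  have Pc: "Pm \<in> carrier_mat ?N ?N" unfolding Pm_def by simp
  have QP: "Q * Pm = 1\<^sub>m ?N"
  proof (rule eq_matI)
    fix r c assume "r < dim_row (1\<^sub>m ?N)" "c < dim_col (1\<^sub>m ?N)"
    then have r: "r < ?N" and c: "c < ?N" by auto
    have "(Q * Pm) $$ (r,c) = (\<Sum>k<?N. Q $$ (r,k) * colf c k)"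
      using r c unfolding Q_def Pm_def by (simp add: scalar_prod_def lessThan_atLeast0)
    also have "\<dots> = (if r < n then om n (colf c) (colf (n+r)) else - om n (colf c) (colf (r-n)))"
    proof (cases "r < n")
      case True
      have "(\<Sum>k<?N. Q $$ (r,k) * colf c k) = (\<Sum>k<?N. colf c k * om n (ef k) (colf (n+r)))"
        by (rule sum.cong) (use True in \<open>simp_all add: Q_def\<close>)
      then show ?thesis using True om_exp1[of n "colf c" "colf (n+r)"] by simp
    next
      case False
      have "(\<Sum>k<?N. Q $$ (r,k) * colf c k) = - (\<Sum>k<?N. colf c k * om n (ef k) (colf (r-n)))"
        unfolding sum_negf[symmetric] by (rule sum.cong) (use False r in \<open>simp_all add: Q_def\<close>)
      then show ?thesis using False om_exp1[of n "colf c" "colf (r-n)"] by simp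
    qed
    also have "\<dots> = 1\<^sub>m ?N $$ (r,c)"
    proof (cases "r < n")
      case True
      then have a: "n + r < ?N" by simp
      have "om n (colf c) (colf (n+r)) = om n (ef c) (ef (n+r))" using gram[OF c a] by simp
      also have "\<dots> = (if r = c then 1 else 0)" unfolding om_ef[OF c a] using a c by auto
      finally show ?thesis using True r c by simp
    next
      case False
      then have a: "r - n < ?N" "n + (r - n) = r" "r - n < n" using r by arith+
      have "- om n (colf c) (colf (r-n)) = - om n (ef c) (ef (r-n))" using gram[OF c a(1)] by simp
      also have "\<dots> = (if r = c then 1 else 0)" unfolding om_ef[OF c a(1)] using a c by auto
      finally show ?thesis using False r c by simp
    qed
    finally show "(Q * Pm) $$ (r,c) = 1\<^sub>m ?N $$ (r,c)" .
  qed (use Qc Pc in auto)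
  have PQ: "Pm * Q = 1\<^sub>m ?N" by (rule mat_mult_left_right_inverse[OF Qc Pc QP])
  show ?thesis using Qc QP PQ pres by blast
qed



definition emat :: "nat \<Rightarrow> nat \<Rightarrow> nat \<Rightarrow> 'a::field mat" where
  "emat n i j = mat n n (\<lambda>(r,c). if r = i \<and> c = j then 1 else 0)"

definition DD :: "nat \<Rightarrow> 'a::field mat \<Rightarrow> 'a mat" where
  "DD n X = four_block_mat X (0\<^sub>m n n) (0\<^sub>m n n) (transpose_mat X)"

lemma emat_car[simp]: "emat n i j \<in> carrier_mat n n"
  unfolding emat_def by simp

lemma emat_mult:
  assumes "i<n" "j<n" "k<n" "l<n"
  shows "emat n i j * (emat n k l :: 'a::field mat) = (if j = k then emat n i l else 0\<^sub>m n n)"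
proof (rule eq_matI)
  fix r c assume "r < dim_row (if j = k then emat n i l else (0\<^sub>m n n :: 'a mat))"
    "c < dim_col (if j = k then emat n i l else (0\<^sub>m n n :: 'a mat))"
  then have r: "r<n" and c: "c<n" by (auto simp: emat_def split: if_splits)
  have "(emat n i j * (emat n k l :: 'a mat)) $$ (r,c) =
     (\<Sum>m<n. (if r = i \<and> m = j then 1 else 0) * (if m = k \<and> c = l then 1 else (0::'a)))"
    using r c unfolding emat_def by (simp add: scalar_prod_def lessThan_atLeast0)
  also have "\<dots> = (\<Sum>m<n. if m = j then (if r = i \<and> j = k \<and> c = l then 1 else 0) else (0::'a))"
    by (rule sum.cong) auto
  also have "\<dots> = (if r = i \<and> j = k \<and> c = l then 1 else 0)"
    using assms by simp
  also have "\<dots> = (if j = k then emat n i l else (0\<^sub>m n n :: 'a mat)) $$ (r,c)"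
    using r c unfolding emat_def by auto
  finally show "(emat n i j * emat n k l) $$ (r,c) = (if j = k then emat n i l else (0\<^sub>m n n :: 'a mat)) $$ (r,c)" .
qed (auto simp: emat_def)

lemma mv_zero_fun: "mv A 0 = 0"
  unfolding mv_def by (rule ext) simp

lemma smult_cancel: "(c::'a::field) \<noteq> 0 \<Longrightarrow> A \<in> carrier_mat m k \<Longrightarrow> B \<in> carrier_mat m k \<Longrightarrow> c \<cdot>\<^sub>m A = c \<cdot>\<^sub>m B \<Longrightarrow> A = B"
proof -
  assume c: "c \<noteq> 0" and A: "A \<in> carrier_mat m k" and B: "B \<in> carrier_mat m k" and e: "c \<cdot>\<^sub>m A = c \<cdot>\<^sub>m B"
  show "A = B"
  proof (rule eq_matI)
    fix i j assume "i < dim_row B" "j < dim_col B"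
    then have "(c \<cdot>\<^sub>m A) $$ (i,j) = (c \<cdot>\<^sub>m B) $$ (i,j)" using e by simp
    then show "A $$ (i,j) = B $$ (i,j)" using c A B \<open>i < dim_row B\<close> \<open>j < dim_col B\<close> by simp
  qed (use A B in auto)
qed

locale mainloc =
  fixes n :: nat and J :: "'a::field mat set" and f :: "'a mat \<Rightarrow> 'a mat"
  assumes two: "(2::'a) \<noteq> 0" and sub: "jordan_subalgebra J (Hj n)"
    and iso: "jordan_iso (carrier_mat n n) J f"
begin

lemma fbij: "bij_betw f (carrier_mat n n) J" using iso unfolding jordan_iso_def by blast
lemma fhom: "jordan_hom_on (carrier_mat n n) f" using iso unfolding jordan_iso_def by blast

lemma fJ: "X \<in> carrier_mat n n \<Longrightarrow> f X \<in> J" using fbij by (rule bij_betw_apply)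
lemma JH: "J \<subseteq> Hj n" using sub unfolding jordan_subalgebra_def by blast
lemma fH: "X \<in> carrier_mat n n \<Longrightarrow> f X \<in> Hj n" using fJ JH by blast
lemma fcar: "X \<in> carrier_mat n n \<Longrightarrow> f X \<in> carrier_mat (n+n) (n+n)" using fH Hj_iff by blast

lemma fadd: "X \<in> carrier_mat n n \<Longrightarrow> Y \<in> carrier_mat n n \<Longrightarrow> f (X + Y) = f X + f Y"
  using fhom unfolding jordan_hom_on_def by blast
lemma fsc: "X \<in> carrier_mat n n \<Longrightarrow> f (c \<cdot>\<^sub>m X) = c \<cdot>\<^sub>m f X"
  using fhom unfolding jordan_hom_on_def by blast
lemma fjprod: "X \<in> carrier_mat n n \<Longrightarrow> Y \<in> carrier_mat n n \<Longrightarrow> f (jprod X Y) = jprod (f X) (f Y)"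
  using fhom unfolding jordan_hom_on_def by blast

lemma f0: "f (0\<^sub>m n n) = 0\<^sub>m (n+n) (n+n)"
proof -
  have z: "0\<^sub>m n n \<in> carrier_mat n n" by simp
  have "f (0\<^sub>m n n) = f ((0::'a) \<cdot>\<^sub>m 0\<^sub>m n n)" by simp
  also have "\<dots> = (0::'a) \<cdot>\<^sub>m f (0\<^sub>m n n)" by (rule fsc[OF z])
  also have "\<dots> = 0\<^sub>m (n+n) (n+n)" using fcar[OF z] by (intro eq_matI) auto
  finally show ?thesis .
qed

lemma fjp: "X \<in> carrier_mat n n \<Longrightarrow> Y \<in> carrier_mat n n \<Longrightarrow> f X * f Y + f Y * f X = f (X * Y + Y * X)"
proof -
  assume X: "X \<in> carrier_mat n n" and Y: "Y \<in> carrier_mat n n"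
  have Z: "X * Y + Y * X \<in> carrier_mat n n" using X Y by simp
  have fX: "f X \<in> carrier_mat (n+n) (n+n)" and fY: "f Y \<in> carrier_mat (n+n) (n+n)" using fcar X Y by auto
  have "(1/2::'a) \<cdot>\<^sub>m f (X * Y + Y * X) = f (jprod X Y)" unfolding jprod_def fsc[OF Z] by simp
  also have "\<dots> = jprod (f X) (f Y)" by (rule fjprod[OF X Y])
  also have "\<dots> = (1/2::'a) \<cdot>\<^sub>m (f X * f Y + f Y * f X)" unfolding jprod_def by simp
  finally have e: "(1/2::'a) \<cdot>\<^sub>m f (X * Y + Y * X) = (1/2::'a) \<cdot>\<^sub>m (f X * f Y + f Y * f X)" .
  have "(1/2::'a) \<noteq> 0" using two by simp
  from smult_cancel[OF this _ _ e] show ?thesis using fcar[OF Z] fX fY by (metis add_carrier_mat mult_carrier_mat)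
qed

definition a :: "nat \<Rightarrow> nat \<Rightarrow> 'a mat" where "a i j = f (emat n i j)"

lemma a_car: "a i j \<in> carrier_mat (n+n) (n+n)" unfolding a_def by (rule fcar) simp
lemma a_H: "a i j \<in> Hj n" unfolding a_def by (rule fH) simp

lemma fif: "f (if b then emat n i j else 0\<^sub>m n n) = (if b then a i j else 0\<^sub>m (n+n) (n+n))"
  unfolding a_def using f0 by simp

lemma T_jrep: "jrep n (\<lambda>i j. mv (a i j))"
proof (rule jrep.intro)
  fix i j x y show "mv (a i j) (x + y) = mv (a i j) x + mv (a i j) y" by (rule mv_add)
next
  fix i j c x show "mv (a i j) (\<lambda>r. c * x r) = (\<lambda>r. c * mv (a i j) x r)" by (rule mv_sc)
next
  show "(2::'a) \<noteq> 0" by (rule two)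
next
  fix i j x y assume "i<n" "j<n" show "om n (mv (a i j) x) y = om n x (mv (a i j) y)"
    by (rule Hj_adj[OF a_H])
next
  fix r i j x assume "n+n \<le> r" then show "mv (a i j) x r = 0" by (intro mv_supp) (simp add: carrier_matD(1)[OF a_car])
next
  fix i j k l x assume h: "i<n" "j<n" "k<n" "l<n"
  have c: "a i j \<in> carrier_mat (n+n) (n+n)" "a k l \<in> carrier_mat (n+n) (n+n)" using a_car by auto
  have "mv (a i j) (mv (a k l) x) + mv (a k l) (mv (a i j) x) = mv (a i j * a k l + a k l * a i j) x"
    using c by (simp add: mv_mult[of _ "n+n" "n+n"] mv_addm[of _ "n+n" "n+n"])
  also have "a i j * a k l + a k l * a i j = f (emat n i j * emat n k l + emat n k l * emat n i j)"
    unfolding a_def by (rule fjp) simp_all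
  also have "\<dots> = f ((if j = k then emat n i l else 0\<^sub>m n n) + (if l = i then emat n k j else 0\<^sub>m n n))"
    unfolding emat_mult[OF h] emat_mult[OF h(3,4,1,2)] by (rule refl)
  also have "\<dots> = (if j = k then a i l else 0\<^sub>m (n+n) (n+n)) + (if l = i then a k j else 0\<^sub>m (n+n) (n+n))"
    by (subst fadd) (simp_all add: fif)
  also have "mv \<dots> x = (if j = k then mv (a i l) x else 0) + (if l = i then mv (a k j) x else 0)"
    by (subst mv_addm[of _ "n+n" "n+n"]) (simp_all add: a_car mv_zero)
  finally show "mv (a i j) (mv (a k l) x) + mv (a k l) (mv (a i j) x) =
     (if j = k then mv (a i l) x else 0) + (if l = i then mv (a k j) x else 0)" .
qed

lemma E00: "0 < n \<Longrightarrow> \<exists>g. mv (a 0 0) g \<noteq> 0"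
proof (rule ccontr)
  assume n: "0 < n" and "\<not> (\<exists>g. mv (a 0 0) g \<noteq> 0)"
  then have z: "\<And>g. mv (a 0 0) g = 0" by blast
  have "a 0 0 = 0\<^sub>m (n+n) (n+n)"
    by (rule mv_eq[OF a_car zero_carrier_mat]) (simp add: z mv_zero)
  then have "f (emat n 0 0) = f (0\<^sub>m n n)" unfolding a_def f0 by simp
  then have "emat n 0 0 = (0\<^sub>m n n :: 'a mat)"
    using fbij unfolding bij_betw_def inj_on_def by (meson emat_car zero_carrier_mat)
  then have "emat n 0 0 $$ (0,0) = (0\<^sub>m n n :: 'a mat) $$ (0,0)" by simp
  then show False using n unfolding emat_def by simp
qed

end



lemma DD_car: "X \<in> carrier_mat n n \<Longrightarrow> DD n X \<in> carrier_mat (n+n) (n+n)"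
  unfolding DD_def by simp

lemma DD_add: "A \<in> carrier_mat n n \<Longrightarrow> B \<in> carrier_mat n n \<Longrightarrow> DD n (A + B) = DD n A + DD n B"
  unfolding DD_def by (subst add_four_block_mat[of _ n n _ n _ n]) (auto simp: transpose_add)

lemma transpose_smult: "transpose_mat (c \<cdot>\<^sub>m A) = c \<cdot>\<^sub>m transpose_mat A"
  by (rule eq_matI) auto

lemma DD_smult: "A \<in> carrier_mat n n \<Longrightarrow> DD n (c \<cdot>\<^sub>m A) = c \<cdot>\<^sub>m DD n A"
  unfolding DD_def by (subst smult_four_block_mat[of _ n n _ n _ n]) (auto simp: transpose_smult)

lemma DD_zero: "DD n (0\<^sub>m n n) = (0\<^sub>m (n+n) (n+n) :: 'a::field mat)"
proof -
  have "transpose_mat (0\<^sub>m n n) = (0\<^sub>m n n :: 'a mat)" by (rule eq_matI) auto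
  then show ?thesis unfolding DD_def by simp
qed

definition rX :: "nat \<Rightarrow> (nat \<times> nat) set \<Rightarrow> 'a::field mat \<Rightarrow> 'a mat" where
  "rX n K X = mat n n (\<lambda>(r,c). if (r,c) \<in> K then X $$ (r,c) else 0)"

lemma rX_empty: "rX n {} X = 0\<^sub>m n n"
  unfolding rX_def by (rule eq_matI) auto

lemma rX_insert: "p \<notin> K \<Longrightarrow> rX n (insert p K) X = rX n K X + X $$ p \<cdot>\<^sub>m emat n (fst p) (snd p)"
  unfolding rX_def emat_def by (rule eq_matI) (auto simp: case_prod_beta)

lemma rX_full: "X \<in> carrier_mat n n \<Longrightarrow> rX n ({..<n} \<times> {..<n}) X = X"
  unfolding rX_def by (rule eq_matI) auto

lemma rX_car: "rX n K X \<in> carrier_mat n n"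
  unfolding rX_def by simp

context mainloc begin

lemma mainP: "\<exists>Pm Q. Pm \<in> carrier_mat (n+n) (n+n) \<and> Q \<in> carrier_mat (n+n) (n+n) \<and>
   Q * Pm = 1\<^sub>m (n+n) \<and> Pm * Q = 1\<^sub>m (n+n) \<and> (\<forall>g h. om n (mv Pm g) (mv Pm h) = om n g h) \<and>
   (\<forall>X \<in> carrier_mat n n. f X * Pm = Pm * DD n X)"
proof (cases "n = 0")
  case True
  have "f X * 1\<^sub>m (n+n) = 1\<^sub>m (n+n) * DD n X" if X: "X \<in> carrier_mat n n" for X
  proof -
    have c1: "f X * 1\<^sub>m (n+n) \<in> carrier_mat 0 0" using fcar[OF X] True by simp
    have c2: "1\<^sub>m (n+n) * DD n X \<in> carrier_mat 0 0" using DD_car[OF X] True by simp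
    show ?thesis using c1 c2 fcar[OF X] DD_car[OF X] by (intro eq_matI) auto
  qed
  moreover have "om n g h = 0" for g h :: "nat \<Rightarrow> 'a" using True by (simp add: om_def)
  ultimately show ?thesis by (intro exI[of _ "1\<^sub>m (n+n)"]) auto
next
  case False
  then have n: "0 < n" by simp
  interpret jr: jrep n "\<lambda>i j. mv (a i j)" by (rule T_jrep)
  obtain g where g: "mv (a 0 0) g \<noteq> 0" using E00[OF n] by blast
  obtain u w where gp: "jr.GP u w" using jr.exists_GP[OF n g] by blast
  define Pm where "Pm = mat (n+n) (n+n) (\<lambda>(r,c). jr.colf u w c r)"
  obtain Q where Q: "Q \<in> carrier_mat (n+n) (n+n)" "Q * Pm = 1\<^sub>m (n+n)" "Pm * Q = 1\<^sub>m (n+n)"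
     "\<forall>g h. om n (mv Pm g) (mv Pm h) = om n g h"
    using P_exists[of n "jr.colf u w"] jr.gram[OF gp] unfolding Pm_def by blast
  have Pc: "Pm \<in> carrier_mat (n+n) (n+n)" unfolding Pm_def by simp
  have mvPe: "mv Pm (ef c) = jr.colf u w c" if c: "c < n+n" for c
  proof
    fix r show "mv Pm (ef c) r = jr.colf u w c r"
      unfolding mv_ef[OF Pc c] using jr.colf_supp[OF gp, of r c] c unfolding Pm_def by auto
  qed
  have Dcol: "mv (DD n (emat n i j)) (ef c) =
     (if c < n then (if c = j then ef i else 0) else (if c - n = i then ef (n+j) else 0))"
    if i: "i<n" and j: "j<n" and c: "c < n+n" for i j c
  proof
    fix r
    show "mv (DD n (emat n i j)) (ef c) r =
      (if c < n then (if c = j then ef i else 0) else (if c - n = i then ef (n+j) else 0)) r"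
      unfolding mv_ef[OF DD_car[OF emat_car] c] using i j c by (auto simp: DD_def emat_def ef_def)
  qed
  have unit: "a i j * Pm = Pm * DD n (emat n i j)" if i: "i<n" and j: "j<n" for i j
  proof (rule mv_eq[of _ "n+n" "n+n"])
    show "a i j * Pm \<in> carrier_mat (n+n) (n+n)" using a_car[of i j] Pc by (rule mult_carrier_mat)
    show "Pm * DD n (emat n i j) \<in> carrier_mat (n+n) (n+n)" using Pc DD_car[OF emat_car] by (rule mult_carrier_mat)
    fix c assume c: "c < n+n"
    have "mv (a i j * Pm) (ef c) = mv (a i j) (jr.colf u w c)"
      using mv_mult[OF a_car Pc] mvPe[OF c] by simp
    also have "\<dots> = (if c < n then (if c = j then jr.colf u w i else 0)
        else (if c - n = i then jr.colf u w (n + j) else 0))"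
      by (rule jr.act_colf[OF gp i j c])
    also have "\<dots> = mv Pm (if c < n then (if c = j then ef i else 0) else (if c - n = i then ef (n+j) else 0))"
      using mvPe i j by (simp add: mv_zero_fun)
    also have "\<dots> = mv (Pm * DD n (emat n i j)) (ef c)"
      unfolding mv_mult[OF Pc DD_car[OF emat_car]] Dcol[OF i j c] by (rule refl)
    finally show "mv (a i j * Pm) (ef c) = mv (Pm * DD n (emat n i j)) (ef c)" .
  qed
  have good: "f (rX n K X) * Pm = Pm * DD n (rX n K X)"
    if "finite K" "K \<subseteq> {..<n} \<times> {..<n}" for K X
    using that
  proof (induction K rule: finite_induct)
    case empty
    show ?case unfolding rX_empty f0 DD_zero using Pc by simp
  next
    case (insert p K)
    obtain i j where p: "p = (i,j)" by (cases p)
    have i: "i<n" and j: "j<n" using insert p by auto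
    define A where "A = rX n K X"
    define c where "c = X $$ p"
    have A: "A \<in> carrier_mat n n" unfolding A_def by (rule rX_car)
    have IH: "f A * Pm = Pm * DD n A" using insert unfolding A_def by simp
    have e: "rX n (insert p K) X = A + c \<cdot>\<^sub>m emat n i j" unfolding A_def c_def
      using rX_insert[OF insert(2)] p by simp
    have "f (A + c \<cdot>\<^sub>m emat n i j) = f A + c \<cdot>\<^sub>m a i j"
      unfolding a_def using A by (simp add: fadd fsc)
    then have "f (rX n (insert p K) X) * Pm = f A * Pm + c \<cdot>\<^sub>m (a i j * Pm)"
      unfolding e using fcar[OF A] a_car Pc
      by (simp add: add_mult_distrib_mat[of _ "n+n" "n+n"] mult_smult_assoc_mat[of _ "n+n" "n+n"])
    also have "\<dots> = Pm * DD n A + c \<cdot>\<^sub>m (Pm * DD n (emat n i j))" unfolding IH unit[OF i j] by simp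
    also have "\<dots> = Pm * (DD n A + c \<cdot>\<^sub>m DD n (emat n i j))"
    proof -
      have DE: "DD n (emat n i j) \<in> carrier_mat (n+n) (n+n)" by (rule DD_car[OF emat_car])
      have DE2: "c \<cdot>\<^sub>m DD n (emat n i j) \<in> carrier_mat (n+n) (n+n)" by (rule smult_carrier_mat[OF DE])
      show ?thesis unfolding mult_add_distrib_mat[OF Pc DD_car[OF A] DE2] mult_smult_distrib[OF Pc DE] by (rule refl)
    qed
    also have "\<dots> = Pm * DD n (rX n (insert p K) X)"
      unfolding e using A by (simp add: DD_add DD_smult)
    finally show ?case .
  qed
  have "\<forall>X \<in> carrier_mat n n. f X * Pm = Pm * DD n X"
  proof
    fix X :: "'a mat" assume X: "X \<in> carrier_mat n n"
    show "f X * Pm = Pm * DD n X" using good[of "{..<n} \<times> {..<n}" X] rX_full[OF X] by simp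
  qed
  then show ?thesis using Pc Q by blast
qed

end



lemma conj_H:
  assumes A: "A \<in> carrier_mat (n+n) (n+n)" and B: "B \<in> carrier_mat (n+n) (n+n)"
    and ab: "\<And>x y. om n (mv A x) y = om n x (mv B y)"
    and ba: "\<And>x y. om n (mv B x) y = om n x (mv A y)"
    and Y: "Y \<in> Hj n"
  shows "A * Y * B \<in> Hj n"
proof (rule adj_Hj)
  have Yc: "Y \<in> carrier_mat (n+n) (n+n)" using Y Hj_iff by blast
  show "A * Y * B \<in> carrier_mat (n+n) (n+n)" using A B Yc by simp
  have mvs: "mv (A * Y * B) x = mv A (mv Y (mv B x))" for x
    unfolding mv_mult[OF mult_carrier_mat[OF A Yc] B] mv_mult[OF A Yc] by (rule refl)
  fix g h
  have "om n (mv (A * Y * B) g) h = om n (mv Y (mv B g)) (mv B h)" unfolding mvs by (rule ab)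
  also have "\<dots> = om n (mv B g) (mv Y (mv B h))" by (rule Hj_adj[OF Y])
  also have "\<dots> = om n g (mv (A * Y * B) h)" unfolding mvs by (rule ba)
  finally show "om n (mv (A * Y * B) g) h = om n g (mv (A * Y * B) h)" .
qed

lemma sq_assoc: "A \<in> carrier_mat N N \<Longrightarrow> B \<in> carrier_mat N N \<Longrightarrow> C \<in> carrier_mat N N \<Longrightarrow>
  A * B * C = A * (B * (C::'a::field mat))"
  by simp

lemma sq_mult: "A \<in> carrier_mat N N \<Longrightarrow> B \<in> carrier_mat N N \<Longrightarrow> A * (B::'a::field mat) \<in> carrier_mat N N"
  by simp

theorem lemma2p4:
  fixes n :: nat and J :: "'a::field mat set"
  assumes "alg_closed_field TYPE('a)"
    and "(2::'a) \<noteq> 0"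
    and "jordan_subalgebra J (Hj n)"
    and "jordan_isomorphic (carrier_mat n n) J"
  shows "\<exists>\<phi>. jordan_iso (Hj n) (Hj n) \<phi> \<and>
           \<phi> ` J = {four_block_mat X (0\<^sub>m n n) (0\<^sub>m n n) (transpose_mat X) | X.
                     X \<in> carrier_mat n n}"
proof -
  obtain f where iso: "jordan_iso (carrier_mat n n) J f"
    using assms(4) unfolding jordan_isomorphic_def by blast
  interpret mainloc n J f using assms(2,3) iso by unfold_locales
  obtain Pm Q where Pc: "Pm \<in> carrier_mat (n+n) (n+n)" and Qc: "Q \<in> carrier_mat (n+n) (n+n)"
    and QP: "Q * Pm = 1\<^sub>m (n+n)" and PQ: "Pm * Q = 1\<^sub>m (n+n)"
    and pres: "\<And>g h. om n (mv Pm g) (mv Pm h) = om n g h"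
    and comm: "\<And>X. X \<in> carrier_mat n n \<Longrightarrow> f X * Pm = Pm * DD n X"
    using mainP by blast
  have mv1: "om n (mv (1\<^sub>m (n+n)) x) y = om n x y" "om n y (mv (1\<^sub>m (n+n)) x) = om n y x" for x y
    by (rule om_cong; simp add: mv_one)+
  have adjQ: "om n (mv Q x) y = om n x (mv Pm y)" for x y
  proof -
    have "om n (mv Q x) y = om n (mv Pm (mv Q x)) (mv Pm y)" by (rule pres[symmetric])
    also have "\<dots> = om n (mv (1\<^sub>m (n+n)) x) (mv Pm y)" using mv_mult[OF Pc Qc, of x] PQ by simp
    also have "\<dots> = om n x (mv Pm y)" by (rule mv1)
    finally show ?thesis .
  qed
  have adjP: "om n (mv Pm x) y = om n x (mv Q y)" for x y
  proof -
    have "om n x (mv Q y) = om n (mv Pm x) (mv Pm (mv Q y))" by (rule pres[symmetric])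
    also have "\<dots> = om n (mv Pm x) (mv (1\<^sub>m (n+n)) y)" using mv_mult[OF Pc Qc, of y] PQ by simp
    also have "\<dots> = om n (mv Pm x) y" by (rule mv1)
    finally show ?thesis by simp
  qed
  define \<phi> where "\<phi> = (\<lambda>Y. Q * Y * Pm)"
  have Hc: "Y \<in> carrier_mat (n+n) (n+n)" if "Y \<in> Hj n" for Y using that Hj_iff by blast
  have maps: "\<phi> Y \<in> Hj n" if "Y \<in> Hj n" for Y
    unfolding \<phi>_def by (rule conj_H[OF Qc Pc adjQ adjP that])
  have bk: "Pm * Y * Q \<in> Hj n" if "Y \<in> Hj n" for Y
    by (rule conj_H[OF Pc Qc adjP adjQ that])
  have qp: "Q * (Pm * Z) = Z" if "Z \<in> carrier_mat (n+n) (n+n)" for Z :: "'a mat"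
  proof -
    have "Q * (Pm * Z) = (Q * Pm) * Z" by (rule assoc_mult_mat[symmetric, OF Qc Pc that])
    then show ?thesis using QP that by simp
  qed
  have pq: "Pm * (Q * Z) = Z" if "Z \<in> carrier_mat (n+n) (n+n)" for Z :: "'a mat"
  proof -
    have "Pm * (Q * Z) = (Pm * Q) * Z" by (rule assoc_mult_mat[symmetric, OF Pc Qc that])
    then show ?thesis using PQ that by simp
  qed
  note ms = sq_assoc[where N="n+n"] sq_mult[where N="n+n"] qp pq Pc Qc QP PQ
  have cancel1: "Q * (Pm * Y * Q) * Pm = Y" if "Y \<in> carrier_mat (n+n) (n+n)" for Y :: "'a mat"
    using that by (simp add: ms)
  have cancel2: "Pm * (Q * Y * Pm) * Q = Y" if "Y \<in> carrier_mat (n+n) (n+n)" for Y :: "'a mat"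
    using that by (simp add: ms)
  have bij: "bij_betw \<phi> (Hj n) (Hj n)"
    unfolding bij_betw_def
  proof
    show "inj_on \<phi> (Hj n)"
    proof
      fix Y Y' assume Y: "Y \<in> Hj n" and Y': "Y' \<in> Hj n" and e: "\<phi> Y = \<phi> Y'"
      have "Pm * (Q * Y * Pm) * Q = Pm * (Q * Y' * Pm) * Q" using e unfolding \<phi>_def by simp
      then show "Y = Y'" using cancel2 Hc[OF Y] Hc[OF Y'] by simp
    qed
    show "\<phi> ` Hj n = Hj n"
    proof
      show "\<phi> ` Hj n \<subseteq> Hj n" using maps by blast
      show "Hj n \<subseteq> \<phi> ` Hj n"
      proof
        fix Z :: "'a mat" assume Z: "Z \<in> Hj n"
        have "\<phi> (Pm * Z * Q) = Z" unfolding \<phi>_def by (rule cancel1[OF Hc[OF Z]])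
        then show "Z \<in> \<phi> ` Hj n" using bk[OF Z] by (metis image_eqI)
      qed
    qed
  qed
  have hom: "jordan_hom_on (Hj n) \<phi>"
    unfolding jordan_hom_on_def
  proof (intro conjI ballI allI)
    fix Y Y' :: "'a mat" assume Y: "Y \<in> Hj n" and Y': "Y' \<in> Hj n"
    note c = Hc[OF Y] Hc[OF Y']
    show "\<phi> (Y + Y') = \<phi> Y + \<phi> Y'"
      unfolding \<phi>_def using c Pc Qc
      by (simp add: mult_add_distrib_mat[of _ "n+n" "n+n"] add_mult_distrib_mat[of _ "n+n" "n+n"])
    have prod: "\<phi> Y * \<phi> Y' = Q * (Y * Y') * Pm"
      unfolding \<phi>_def using c by (simp add: ms)
    have prod': "\<phi> Y' * \<phi> Y = Q * (Y' * Y) * Pm"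
      unfolding \<phi>_def using c by (simp add: ms)
    have YY: "Y * Y' + Y' * Y \<in> carrier_mat (n+n) (n+n)" using c by simp
    show "\<phi> (jprod Y Y') = jprod (\<phi> Y) (\<phi> Y')"
      unfolding jprod_def prod prod' unfolding \<phi>_def
    proof -
      have A: "Y * Y' \<in> carrier_mat (n+n) (n+n)" and B: "Y' * Y \<in> carrier_mat (n+n) (n+n)" using c by auto
      have QA: "Q * (Y * Y') \<in> carrier_mat (n+n) (n+n)" and QB: "Q * (Y' * Y) \<in> carrier_mat (n+n) (n+n)"
        using A B Qc by auto
      have QZ: "Q * (Y * Y' + Y' * Y) \<in> carrier_mat (n+n) (n+n)" using YY Qc by auto
      have "Q * ((1/2::'a) \<cdot>\<^sub>m (Y * Y' + Y' * Y)) * Pm = (1/2::'a) \<cdot>\<^sub>m (Q * (Y * Y' + Y' * Y)) * Pm"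
        unfolding mult_smult_distrib[OF Qc YY] by (rule refl)
      also have "\<dots> = (1/2::'a) \<cdot>\<^sub>m (Q * (Y * Y' + Y' * Y) * Pm)"
        by (rule mult_smult_assoc_mat[OF QZ Pc])
      also have "Q * (Y * Y' + Y' * Y) * Pm = Q * (Y * Y') * Pm + Q * (Y' * Y) * Pm"
        unfolding mult_add_distrib_mat[OF Qc A B] by (rule add_mult_distrib_mat[OF QA QB Pc])
      finally show "Q * ((1/2::'a) \<cdot>\<^sub>m (Y * Y' + Y' * Y)) * Pm =
          (1/2::'a) \<cdot>\<^sub>m (Q * (Y * Y') * Pm + Q * (Y' * Y) * Pm)" .
    qed
  next
    fix c :: 'a and Y :: "'a mat" assume Y: "Y \<in> Hj n"
    show "\<phi> (c \<cdot>\<^sub>m Y) = c \<cdot>\<^sub>m \<phi> Y"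
      unfolding \<phi>_def using Hc[OF Y] Pc Qc
      by (simp add: mult_smult_distrib[of _ "n+n" "n+n"] mult_smult_assoc_mat[of _ "n+n" "n+n"])
  qed
  have img: "\<phi> ` J = {four_block_mat X (0\<^sub>m n n) (0\<^sub>m n n) (transpose_mat X) | X. X \<in> carrier_mat n n}"
  proof -
    have J: "J = f ` carrier_mat n n" using fbij unfolding bij_betw_def by simp
    have e: "\<phi> (f X) = DD n X" if X: "X \<in> carrier_mat n n" for X
    proof -
      have "\<phi> (f X) = Q * (f X * Pm)" unfolding \<phi>_def using fcar[OF X] by (simp add: ms)
      also have "\<dots> = Q * (Pm * DD n X)" using comm[OF X] by simp
      also have "\<dots> = DD n X" using DD_car[OF X] by (simp add: ms)
      finally show ?thesis .
    qed
    show ?thesis unfolding J image_image using e unfolding DD_def by auto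
  qed
  show ?thesis using bij hom img unfolding jordan_iso_def by blast
qed


end
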